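(* Let $\kappa > 0$ and let $(X,d)$ be a complete CAT$(\kappa)$ space such that $d(v,w) < \pi/(2\sqrt{\kappa})$ for all $v,w \in X$, and let $f : X \to (-\infty,\infty]$ be a proper, convex and lower semi-continuous function. Let $x \in X$ and suppose there is a sequence of positive real numbers $(\lambda_n)$ with $\lim_{n\to\infty}\lambda_n = \infty$ such that \[ \limsup_{n \to \infty} d(x, J_{\lambda_n} x) < \pi/(2\sqrt{\kappa}). \] Then $(J_\lambda x)_{\lambda > 0}$ converges to a minimum point of $f$ as $\lambda \to \infty$.
   Context: A CAT$(\kappa)$ space ($\kappa>0$) is a metric space in which any two points at distance $<\pi/\sqrt{\kappa}$ are joined by a geodesic and every geodesic triangle of perimeter $<2\pi/\sqrt{\kappa}$ satisfies the CAT$(\kappa)$ comparison inequality with respect to its comparison triangle in the sphere of constant curvature $\kappa$. Writing $(1-t)x+ty$ for the point at distance $t\,d(x,y)$ from $x$ on the geodesic from $x$ to $y$, $f$ is convex if $f((1-t)x+ty) \le (1-t)f(x)+tf(y)$ for all $x,y$, $t\in[0,1]$; proper means not identically $\infty$. For $x \in X$, $\Psi_x : X \to [0,\infty)$ is $\Psi_x(y) = \frac{1}{\kappa\cos(\sqrt{\kappa}\,d(y,x))} - \frac{\cos(\sqrt{\kappa}\,d(y,x))}{\kappa}$, and for $\lambda > 0$ the resolvent is $J_\lambda x = J^f_\lambda(x) = \operatorname{argmin}_{y \in X}\left[f(y) + \frac{1}{\lambda}\Psi_x(y)\right]$, which exists and is unique under the stated assumptions. *)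

theory Defs
  imports "HOL-Analysis.Analysis"
begin

definition geodesic_in :: "'a set \<Rightarrow> ('a \<Rightarrow> 'a \<Rightarrow> real) \<Rightarrow> (real \<Rightarrow> 'a) \<Rightarrow> 'a \<Rightarrow> 'a \<Rightarrow> bool" where
  "geodesic_in S d g x y \<longleftrightarrow>
     g 0 = x \<and> g (d x y) = y \<and> g ` {0..d x y} \<subseteq> S \<and>
     (\<forall>s\<in>{0..d x y}. \<forall>t\<in>{0..d x y}. d (g s) (g t) = \<bar>s - t\<bar>)"

text \<open>Model space of constant curvature kappa > 0: the sphere of radius 1/sqrt kappa in R^3
  with its intrinsic (great-circle) metric.\<close>
definition model_sphere :: "real \<Rightarrow> (real^3) set" where
  "model_sphere \<kappa> = {v. norm v = 1 / sqrt \<kappa>}"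

definition model_dist :: "real \<Rightarrow> real^3 \<Rightarrow> real^3 \<Rightarrow> real" where
  "model_dist \<kappa> u v = arccos (\<kappa> * (u \<bullet> v)) / sqrt \<kappa>"

definition side_comparison ::
  "real \<Rightarrow> (real \<Rightarrow> 'a::metric_space) \<Rightarrow> (real \<Rightarrow> real^3) \<Rightarrow> real \<Rightarrow>
   (real \<Rightarrow> 'a) \<Rightarrow> (real \<Rightarrow> real^3) \<Rightarrow> real \<Rightarrow> bool" where
  "side_comparison \<kappa> g h a g' h' b \<longleftrightarrow>
     (\<forall>s\<in>{0..a}. \<forall>t\<in>{0..b}. dist (g s) (g' t) \<le> model_dist \<kappa> (h s) (h' t))"

text \<open>CAT(kappa) space (the whole type is the space X).\<close>
definition CAT :: "real \<Rightarrow> 'a::metric_space itself \<Rightarrow> bool" where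
  "CAT \<kappa> _ \<longleftrightarrow>
     (\<forall>x y::'a. dist x y < pi / sqrt \<kappa> \<longrightarrow> (\<exists>g. geodesic_in UNIV dist g x y)) \<and>
     (\<forall>(p::'a) q r g1 g2 g3.
        geodesic_in UNIV dist g1 p q \<and> geodesic_in UNIV dist g2 q r \<and> geodesic_in UNIV dist g3 r p \<and>
        dist p q + dist q r + dist r p < 2 * pi / sqrt \<kappa> \<longrightarrow>
        (\<forall>p' q' r' h1 h2 h3.
           p' \<in> model_sphere \<kappa> \<and> q' \<in> model_sphere \<kappa> \<and> r' \<in> model_sphere \<kappa> \<and>
           model_dist \<kappa> p' q' = dist p q \<and> model_dist \<kappa> q' r' = dist q r \<and>
           model_dist \<kappa> r' p' = dist r p \<and>
           geodesic_in (model_sphere \<kappa>) (model_dist \<kappa>) h1 p' q' \<and>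
           geodesic_in (model_sphere \<kappa>) (model_dist \<kappa>) h2 q' r' \<and>
           geodesic_in (model_sphere \<kappa>) (model_dist \<kappa>) h3 r' p' \<longrightarrow>
           side_comparison \<kappa> g1 h1 (dist p q) g2 h2 (dist q r) \<and>
           side_comparison \<kappa> g2 h2 (dist q r) g3 h3 (dist r p) \<and>
           side_comparison \<kappa> g3 h3 (dist r p) g1 h1 (dist p q)))"

definition geod_convex :: "('a::metric_space \<Rightarrow> ereal) \<Rightarrow> bool" where
  "geod_convex f \<longleftrightarrow>
     (\<forall>x y g t. geodesic_in UNIV dist g x y \<and> t \<in> {0..1} \<longrightarrow>
        f (g (t * dist x y)) \<le> ereal (1 - t) * f x + ereal t * f y)"

definition proper_fun :: "('a \<Rightarrow> ereal) \<Rightarrow> bool" where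
  "proper_fun f \<longleftrightarrow> (\<forall>x. f x \<noteq> -\<infinity>) \<and> (\<exists>x. f x \<noteq> \<infinity>)"

definition lsc :: "('a::topological_space \<Rightarrow> ereal) \<Rightarrow> bool" where
  "lsc f \<longleftrightarrow> (\<forall>x. f x \<le> Liminf (at x) f)"

definition Psi :: "real \<Rightarrow> 'a::metric_space \<Rightarrow> 'a \<Rightarrow> real" where
  "Psi \<kappa> x y = 1 / (\<kappa> * cos (sqrt \<kappa> * dist y x)) - cos (sqrt \<kappa> * dist y x) / \<kappa>"

definition resolvent :: "real \<Rightarrow> ('a::metric_space \<Rightarrow> ereal) \<Rightarrow> real \<Rightarrow> 'a \<Rightarrow> 'a" where
  "resolvent \<kappa> f lam x =
     (THE y. \<forall>z. f y + ereal (Psi \<kappa> x y / lam) \<le> f z + ereal (Psi \<kappa> x z / lam))"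

end

theory Submission
  imports Defs
begin

lemma inner_vec3: "inner (vector [a1,a2,a3] :: real^3) (vector [b1,b2,b3]) = a1*b1+a2*b2+a3*b3"
  by (simp add: inner_vec_def sum_3)

lemma sphere_inner:
  assumes "k > 0" "u \<in> model_sphere k"
  shows "inner u u = 1 / k"
proof -
  have "norm u = 1 / sqrt k" using assms by (simp add: model_sphere_def)
  hence "(norm u)^2 = 1/k" using assms by (simp add: power_divide)
  thus ?thesis by (simp add: power2_norm_eq_inner)
qed

lemma sphere_of_inner:
  assumes "k > 0" "inner u u = 1 / k"
  shows "u \<in> model_sphere k"
proof -
  have "norm u = sqrt (inner u u)" by (simp add: norm_eq_sqrt_inner)
  thus ?thesis using assms by (simp add: model_sphere_def real_sqrt_divide)
qed

lemma sphere_inner_bound: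
  assumes "k > 0" "u \<in> model_sphere k" "v \<in> model_sphere k"
  shows "\<bar>k * inner u v\<bar> \<le> 1"
proof -
  have "\<bar>inner u v\<bar> \<le> norm u * norm v" by (rule Cauchy_Schwarz_ineq2)
  also have "\<dots> = 1/k" using assms by (simp add: model_sphere_def)
  finally show ?thesis using assms by (simp add: abs_mult field_simps)
qed

lemma orth_frame_inner:
  fixes e e' :: "real^3"
  assumes "inner e e = 1" "inner e' e' = 1" "inner e e' = 0"
  shows "inner (cos a *\<^sub>R e + sin a *\<^sub>R e') (cos b *\<^sub>R e + sin b *\<^sub>R e') = cos (a - b)"
proof -
  have "inner e' e = 0" using assms by (simp add: inner_commute)
  thus ?thesis using assms by (simp add: inner_add_left inner_add_right cos_diff)
qed

lemma arccos_cos_abs: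
  assumes "\<bar>x\<bar> \<le> pi"
  shows "arccos (cos x) = \<bar>x\<bar>"
  using assms by (rule arccos_cos_eq_abs)

lemma model_geodesic:
  assumes k: "k > 0" and u: "u \<in> model_sphere k" and v: "v \<in> model_sphere k"
    and nn: "0 \<le> k * inner u v"
  shows "\<exists>h. geodesic_in (model_sphere k) (model_dist k) h u v"
proof (cases "u = v")
  case True
  have "model_dist k u u = 0"
    using sphere_inner[OF k u] k by (simp add: model_dist_def)
  thus ?thesis using True u unfolding geodesic_in_def by (intro exI[of _ "\<lambda>s. u"]) auto
next
  case False
  define S where "S = sqrt k"
  have S: "S > 0" "S * S = k" using k by (auto simp: S_def)
  define c where "c = k * inner u v"
  define th where "th = arccos c"
  have uu: "inner u u = 1/k" and vv: "inner v v = 1/k" using sphere_inner k u v by auto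
  have "0 < inner (u - v) (u - v)" using False by simp
  hence "inner u v < 1/k" using uu vv by (simp add: inner_diff_left inner_diff_right inner_commute)
  hence c1: "c < 1" using k by (simp add: c_def field_simps)
  have c0: "0 \<le> c" using nn c_def by simp
  have thr: "0 < th" "th \<le> pi" using c0 c1 by (auto simp: th_def arccos_lt_bounded less_imp_le)
  have costh: "cos th = c" using c0 c1 by (simp add: th_def cos_arccos)
  have sinth: "sin th = sqrt (1 - c^2)" using c0 c1 by (simp add: th_def sin_arccos)
  have sinpos: "sin th > 0" using sinth c0 c1 by (simp add: power2_less_1_iff abs_less_iff)  
  have sin2: "(sin th)^2 = 1 - c^2" using sinth c0 c1 by (simp add: power_le_one)
  define e where "e = S *\<^sub>R u"
  define e' where "e' = (1 / sin th) *\<^sub>R (S *\<^sub>R v - c *\<^sub>R e)"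
  have ee: "inner e e = 1" using uu S k by (simp add: e_def)
  have euv: "inner e (S *\<^sub>R v) = c" using S by (simp add: e_def c_def)
  have ee': "inner e e' = 0" using ee euv by (simp add: e'_def inner_diff_right)
  have "inner (S *\<^sub>R v - c *\<^sub>R e) (S *\<^sub>R v - c *\<^sub>R e) = 1 - c^2"
    using ee euv vv S k by (simp add: inner_diff_right inner_diff_left inner_commute power2_eq_square)
  hence e'e': "inner e' e' = 1" using sin2 sinpos by (simp add: e'_def power2_eq_square) (metis less_irrefl mult_pos_pos right_minus_eq)
  define h where "h = (\<lambda>s::real. (1/S) *\<^sub>R (cos (S * s) *\<^sub>R e + sin (S * s) *\<^sub>R e'))"
  have hh: "inner (h s) (h t) = cos (S * s - S * t) / k" for s t
    using orth_frame_inner[OF ee e'e' ee'] S by (simp add: h_def power2_eq_square)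
  have hsph: "h s \<in> model_sphere k" for s
    using hh[of s s] k by (intro sphere_of_inner) auto
  have mduv: "model_dist k u v = th / S" by (simp add: model_dist_def th_def c_def S_def)
  have h0: "h 0 = u" using S by (simp add: h_def e_def)
  have "h (th / S) = (1/S) *\<^sub>R (c *\<^sub>R e + (S *\<^sub>R v - c *\<^sub>R e))"
    using S sinpos costh by (simp add: h_def e'_def)
  also have "\<dots> = v" using S by simp
  finally have h1: "h (model_dist k u v) = v" using mduv by simp
  have hd: "model_dist k (h s) (h t) = \<bar>s - t\<bar>" if "s \<in> {0..th/S}" "t \<in> {0..th/S}" for s t
  proof -
    have "0 \<le> S * s" "0 \<le> S * t" using that S by auto
    moreover have "S * s \<le> th" "S * t \<le> th" using that S by (auto simp: field_simps)
    ultimately have "\<bar>S * s - S * t\<bar> \<le> th" by linarith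
    hence "\<bar>S * s - S * t\<bar> \<le> pi" using thr by linarith
    hence "arccos (cos (S * s - S * t)) = \<bar>S * s - S * t\<bar>" by (rule arccos_cos_abs)
    moreover have "\<bar>S * s - S * t\<bar> = S * \<bar>s - t\<bar>" using S
      by (metis abs_mult abs_of_pos right_diff_distrib)
    ultimately show ?thesis using hh[of s t] k S
      by (simp add: model_dist_def S_def[symmetric])
  qed
  show ?thesis unfolding geodesic_in_def
    by (intro exI[of _ h]) (use h0 h1 hsph hd mduv in auto)
qed


lemma model_triangle:
  assumes k: "k > 0" and nn: "0 \<le> a" "0 \<le> b" "0 \<le> c"
    and tri: "a \<le> b + c" "b \<le> a + c" "c \<le> a + b"
    and sm: "sqrt k * a \<le> pi/2" "sqrt k * b \<le> pi/2" "sqrt k * c \<le> pi/2"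
  shows "\<exists>p q r. p \<in> model_sphere k \<and> q \<in> model_sphere k \<and> r \<in> model_sphere k \<and>
     k * inner p q = cos (sqrt k * a) \<and> k * inner q r = cos (sqrt k * b) \<and>
     k * inner r p = cos (sqrt k * c)"
proof -
  define S where "S = sqrt k"
  have S: "S > 0" "S * S = k" using k by (auto simp: S_def)
  define A where "A = S * a"
  define B where "B = S * b"
  define C where "C = S * c"
  have ABC: "0 \<le> A" "0 \<le> B" "0 \<le> C" "A \<le> pi/2" "B \<le> pi/2" "C \<le> pi/2"
    using nn sm S by (auto simp: A_def B_def C_def S_def)
  have tri': "A \<le> B + C" "B \<le> A + C" "C \<le> A + B"
    using tri S by (auto simp: A_def B_def C_def distrib_left[symmetric] mult_left_mono)
  define kk where "kk = (if A = 0 \<or> B = 0 then 1 else (cos C - cos A * cos B) / (sin A * sin B))"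
  have kk: "\<bar>kk\<bar> \<le> 1" and kkeq: "cos B * cos A + sin B * sin A * kk = cos C"
  proof -
    have "\<bar>kk\<bar> \<le> 1 \<and> cos B * cos A + sin B * sin A * kk = cos C"
    proof (cases "A = 0 \<or> B = 0")
      case True
      hence "(A = 0 \<and> B = C) \<or> (B = 0 \<and> A = C)" using tri' ABC by auto
      thus ?thesis using True by (auto simp: kk_def)
    next
      case False
      hence sA: "sin A > 0" and sB: "sin B > 0" using ABC by (auto intro!: sin_gt_zero)
      have "cos (A + B) \<le> cos C" using tri' ABC by (intro cos_monotone_0_pi_le) auto
      hence l: "cos A * cos B - sin A * sin B \<le> cos C" by (simp add: cos_add)
      have "cos C \<le> cos \<bar>A - B\<bar>" using tri' ABC by (intro cos_monotone_0_pi_le) auto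
      also have "cos \<bar>A - B\<bar> = cos (A - B)" by (metis abs_minus_commute abs_of_nonneg cos_minus linorder_le_cases abs_of_nonpos minus_diff_eq)
      finally have u: "cos C \<le> cos A * cos B + sin A * sin B" by (simp add: cos_diff)
      have pos: "sin A * sin B > 0" using sA sB by simp
      have "\<bar>kk\<bar> \<le> 1" using False l u pos by (simp add: kk_def abs_le_iff field_simps)
      moreover have "cos B * cos A + sin B * sin A * kk = cos C"
      proof -
        have "sin B * sin A * kk = cos C - cos A * cos B" using False sA sB by (simp add: kk_def mult.commute)
        thus ?thesis by (simp add: mult.commute)
      qed
      ultimately show ?thesis by simp
    qed
    thus "\<bar>kk\<bar> \<le> 1" "cos B * cos A + sin B * sin A * kk = cos C" by auto
  qed
  have kk2: "kk^2 \<le> 1" using kk by (simp add: abs_square_le_1)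
  define q :: "real^3" where "q = (1/S) *\<^sub>R vector [1, 0, 0]"
  define r :: "real^3" where "r = (1/S) *\<^sub>R vector [cos B, sin B, 0]"
  define p :: "real^3" where "p = (1/S) *\<^sub>R vector [cos A, sin A * kk, sin A * sqrt (1 - kk^2)]"
  have sq: "(sqrt (1 - kk^2))^2 = 1 - kk^2" using kk2 by simp
  have ip: "inner p p = 1/k"
  proof -
    have "inner p p = (1/(S*S)) * ((cos A)^2 + (sin A)^2 * (kk^2 + (sqrt (1 - kk^2))^2))"
      by (simp add: p_def inner_vec3 power2_eq_square algebra_simps)
    also have "\<dots> = 1/k" using sq S by simp
    finally show ?thesis .
  qed
  have iq: "inner q q = 1/k" using S by (simp add: q_def inner_vec3)
  have ir: "inner r r = 1/k" using S by (simp add: r_def inner_vec3 power2_eq_square[symmetric] power_divide)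
  have "k * inner p q = cos A" using S k by (simp add: p_def q_def inner_vec3)
  moreover have "k * inner q r = cos B" using S k by (simp add: r_def q_def inner_vec3)
  moreover have "k * inner r p = cos C"
  proof -
    have "k * inner r p = cos B * cos A + sin B * sin A * kk" using S k
      by (simp add: r_def p_def inner_vec3 algebra_simps)
    thus ?thesis using kkeq by simp
  qed
  ultimately show ?thesis using ip iq ir k
    by (intro exI[of _ p] exI[of _ q] exI[of _ r]) (auto intro: sphere_of_inner simp: A_def B_def C_def S_def)
qed

lemma geod_props:
  assumes "geodesic_in S d g x y"
  shows "g 0 = x" "g (d x y) = y" "\<And>s. s \<in> {0..d x y} \<Longrightarrow> g s \<in> S"
    "\<And>s t. s \<in> {0..d x y} \<Longrightarrow> t \<in> {0..d x y} \<Longrightarrow> d (g s) (g t) = \<bar>s - t\<bar>"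
  using assms unfolding geodesic_in_def by auto

lemma model_dist_cos:
  assumes k: "k > 0" and u: "u \<in> model_sphere k" and v: "v \<in> model_sphere k"
    and md: "model_dist k u v = t"
  shows "k * inner u v = cos (sqrt k * t)"
proof -
  have b: "\<bar>k * inner u v\<bar> \<le> 1" by (rule sphere_inner_bound[OF k u v])
  have "arccos (k * inner u v) = sqrt k * t" using md k by (simp add: model_dist_def field_simps)
  hence "cos (arccos (k * inner u v)) = cos (sqrt k * t)" by simp
  thus ?thesis using b by (simp add: cos_arccos_abs)
qed

lemma cat_mid:
  fixes x y z :: "'a::metric_space"
  assumes k: "k > 0" and cat: "CAT k TYPE('a)"
    and diam: "\<forall>v w::'a. dist v w < pi / (2 * sqrt k)"
    and g: "geodesic_in UNIV dist g y z"
  shows "cos (sqrt k * dist x y) + cos (sqrt k * dist x z)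
     \<le> 2 * cos (sqrt k * dist y z / 2) * cos (sqrt k * dist x (g (dist y z / 2)))"
proof -
  define S where "S = sqrt k"
  have S: "S > 0" "S * S = k" using k by (auto simp: S_def)
  have small: "S * dist v w < pi/2" for v w :: 'a
    using diam S by (auto simp: S_def field_simps)
  have small': "S * dist v w \<le> pi/2" for v w :: 'a using small[of v w] by simp
  have dpi: "dist v w < pi / sqrt k" for v w :: 'a
  proof -
    have "pi / (2 * sqrt k) \<le> pi / sqrt k" using k by (simp add: frac_le)
    thus ?thesis using diam by (meson less_le_trans)
  qed
  have geo: "\<exists>g. geodesic_in UNIV dist g v w" for v w :: 'a
    using cat dpi unfolding CAT_def by blast
  obtain g1 where g1: "geodesic_in UNIV dist g1 x y" using geo by blast
  obtain g3 where g3: "geodesic_in UNIV dist g3 z x" using geo by blast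
  define a where "a = dist x y"
  define b where "b = dist y z"
  define c where "c = dist z x"
  obtain p' q' r' where sph: "p' \<in> model_sphere k" "q' \<in> model_sphere k" "r' \<in> model_sphere k"
    and ipq: "k * inner p' q' = cos (S * a)" and iqr: "k * inner q' r' = cos (S * b)"
    and irp: "k * inner r' p' = cos (S * c)"
    using model_triangle[OF k, of a b c] small'[of x y] small'[of y z] small'[of z x]
      dist_triangle[of x y z] dist_triangle[of y z x] dist_triangle[of z x y]
    by (auto simp: a_def b_def c_def S_def dist_commute)
  have cpos: "0 \<le> cos (S * dist v w)" for v w :: 'a
  proof -
    have "0 \<le> S * dist v w" using S by simp
    thus ?thesis using small'[of v w] by (intro cos_ge_zero) auto
  qed
  obtain h1 where h1: "geodesic_in (model_sphere k) (model_dist k) h1 p' q'"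
    using model_geodesic[OF k sph(1) sph(2)] ipq cpos by (auto simp: a_def)
  obtain h2 where h2: "geodesic_in (model_sphere k) (model_dist k) h2 q' r'"
    using model_geodesic[OF k sph(2) sph(3)] iqr cpos by (auto simp: b_def)
  obtain h3 where h3: "geodesic_in (model_sphere k) (model_dist k) h3 r' p'"
    using model_geodesic[OF k sph(3) sph(1)] irp cpos by (auto simp: c_def)
  have mdeq: "model_dist k u v = t" if "k * inner u v = cos (S * t)" "0 \<le> t" "S * t \<le> pi/2" for u v t
  proof -
    have t1: "S * t \<le> pi" using that(3) pi_gt_zero by linarith
    have t0: "0 \<le> S * t" using that(2) S by simp
    have "arccos (cos (S * t)) = S * t" using t0 t1 by (rule arccos_cos)
    thus ?thesis using that S by (simp add: model_dist_def S_def[symmetric])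
  qed
  have md1: "model_dist k p' q' = dist x y" using mdeq[OF ipq] small' by (simp add: a_def)
  have md2: "model_dist k q' r' = dist y z" using mdeq[OF iqr] small' by (simp add: b_def)
  have md3: "model_dist k r' p' = dist z x" using mdeq[OF irp] small' by (simp add: c_def)
  have per: "dist x y + dist y z + dist z x < 2 * pi / sqrt k"
  proof -
    have "dist x y + dist y z + dist z x < 3 * (pi / (2 * sqrt k))"
      using diam[rule_format, of x y] diam[rule_format, of y z] diam[rule_format, of z x] by linarith
    also have "\<dots> \<le> 2 * pi / sqrt k" using k by (simp add: field_simps)
    finally show ?thesis .
  qed
  have "side_comparison k g h2 (dist y z) g3 h3 (dist z x)"
    using cat unfolding CAT_def
    using g1 g g3 per sph md1 md2 md3 h1 h2 h3 by blast
  hence sc: "dist (g (b/2)) (g3 c) \<le> model_dist k (h2 (b/2)) (h3 c)"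
    unfolding side_comparison_def b_def c_def by auto
  have gx: "g3 c = x" using geod_props(2)[OF g3] by (simp add: c_def)
  have hp: "h3 c = p'" using geod_props(2)[OF h3] md3 by (simp add: c_def)
  define u where "u = h2 (b/2)"
  have b0: "0 \<le> b" by (simp add: b_def)
  have usph: "u \<in> model_sphere k" using geod_props(3)[OF h2, of "b/2"] md2 b0 by (simp add: u_def b_def)
  have hq: "h2 0 = q'" "h2 b = r'" using geod_props(1,2)[OF h2] md2 by (auto simp: b_def)
  have mqu: "model_dist k q' u = b/2"
    using geod_props(4)[OF h2, of 0 "b/2"] md2 b0 hq by (simp add: u_def b_def)
  have iqu: "k * inner q' u = cos (S * (b/2))" using model_dist_cos[OF k sph(2) usph mqu] by (simp add: S_def)
  have mur: "model_dist k u r' = b/2"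
    using geod_props(4)[OF h2, of "b/2" b] md2 b0 hq by (simp add: u_def b_def)
  have iur: "k * inner u r' = cos (S * (b/2))" using model_dist_cos[OF k usph sph(3) mur] by (simp add: S_def)
  define cb where "cb = cos (S * (b/2))"
  have cbpos: "cb > 0"
  proof -
    have "0 \<le> S * (b/2)" using S b0 by simp
    moreover have "S * (b/2) < pi/2"
    proof -
      have "S * (b/2) = (S * b)/2" by simp
      thus ?thesis using small[of y z] pi_gt_zero unfolding b_def by linarith
    qed
    ultimately show ?thesis unfolding cb_def by (intro cos_gt_zero_pi) auto
  qed
  have cosb: "cos (S * b) = 2 * cb^2 - 1"
    using cos_double_cos[of "S * (b/2)"] by (simp add: cb_def)
  define w where "w = (1 / (2 * cb)) *\<^sub>R (q' + r')"
  have uu: "inner u u = 1/k" using sphere_inner[OF k usph] .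
  have qq: "inner q' q' = 1/k" "inner r' r' = 1/k" using sphere_inner[OF k] sph by auto
  have uw: "inner u w = 1/k"
  proof -
    have "inner u w = (inner q' u + inner u r') / (2 * cb)"
      by (simp add: w_def inner_add_right inner_commute divide_simps)
    also have "\<dots> = (2 * cb / k) / (2 * cb)" using iqu iur k by (simp add: cb_def field_simps)
    finally show ?thesis using cbpos by simp
  qed
  have ww: "inner w w = 1/k"
  proof -
    have "inner w w = (inner q' q' + 2 * inner q' r' + inner r' r') / (4 * cb^2)"
      using cbpos by (simp add: w_def inner_add_right inner_add_left inner_commute power2_eq_square add_divide_distrib)
    also have "\<dots> = (2/k + 2 * (2 * cb^2 - 1)/k) / (4 * cb^2)"
      using qq iqr cosb k by (simp add: field_simps)
    also have "\<dots> = 1/k" using cbpos k by (simp add: field_simps power2_eq_square)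
    finally show ?thesis .
  qed
  have "inner (u - w) (u - w) = 0" using uu uw ww
    by (simp add: inner_diff_left inner_diff_right inner_commute)
  hence uw_eq: "u = w" by simp
  have iup: "k * inner u p' = (cos (S * a) + cos (S * c)) / (2 * cb)"
  proof -
    have "k * inner u p' = (k * inner p' q' + k * inner r' p') / (2 * cb)"
      using uw_eq by (simp add: w_def inner_add_left inner_add_right inner_commute add_divide_distrib distrib_left)
    thus ?thesis using ipq irp by simp
  qed
  have bnd: "\<bar>k * inner u p'\<bar> \<le> 1" by (rule sphere_inner_bound[OF k usph sph(1)])
  have "dist (g (b/2)) x \<le> arccos (k * inner u p') / S"
    using sc gx hp by (simp add: model_dist_def u_def S_def)
  hence le: "S * dist x (g (b/2)) \<le> arccos (k * inner u p')" using S by (simp add: field_simps dist_commute)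
  have "cos (arccos (k * inner u p')) \<le> cos (S * dist x (g (b/2)))"
    using le S bnd by (intro cos_monotone_0_pi_le) (auto intro: arccos_ubound)
  hence "(cos (S * a) + cos (S * c)) / (2 * cb) \<le> cos (S * dist x (g (b/2)))"
    using bnd iup by (simp add: cos_arccos_abs)
  hence "cos (S * a) + cos (S * c) \<le> 2 * cb * cos (S * dist x (g (b/2)))"
    using cbpos by (simp add: field_simps)
  thus ?thesis by (simp add: a_def b_def c_def cb_def S_def dist_commute)
qed

lemma hfun_ineq:
  fixes cy cz ca cm :: real
  assumes "0 < cy" "cy \<le> 1" "0 < cz" "cz \<le> 1" "0 < ca" "ca \<le> 1" "0 < cm"
    and mid: "cy + cz \<le> 2 * ca * cm"
  shows "1/cm - cm \<le> ((1/cy - cy) + (1/cz - cz))/2 - (1 - ca)"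
proof -
  define s where "s = (cy + cz)/2"
  have s: "0 < s" "s \<le> 1" using assms by (auto simp: s_def)
  have cms: "s / ca \<le> cm" using mid assms by (simp add: s_def field_simps)
  have sca: "0 < s / ca" using s assms by simp
  have 1: "1/cm - cm \<le> ca/s - s/ca"
  proof -
    have "1/cm \<le> 1/(s/ca)" using cms sca by (intro frac_le) auto
    thus ?thesis using cms by simp
  qed
  have amhm: "2/s \<le> 1/cy + 1/cz"
  proof -
    have "0 \<le> (cy - cz)^2" by simp
    hence "4 * cy * cz \<le> (cy + cz) * (cy + cz)" by (simp add: power2_eq_square algebra_simps)
    hence "4 / (cy + cz) \<le> (cy + cz) / (cy * cz)" using assms by (simp add: field_simps)
    moreover have "2/s = 4/(cy+cz)" unfolding s_def by simp
    moreover have "(cy + cz) / (cy * cz) = 1/cy + 1/cz" using assms by (simp add: field_simps)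
    ultimately show ?thesis by linarith
  qed
  have 2: "ca/s - s/ca \<le> 1/s - s - (1 - ca)"
  proof -
    have a: "0 \<le> (1 - ca) * (1/s - 1)" using s assms by (intro mult_nonneg_nonneg) (simp_all add: field_simps)
    have b: "0 \<le> s * (1/ca - 1)" using s assms by (simp add: field_simps)
    have "1/s - s - (1 - ca) - (ca/s - s/ca) = (1 - ca) * (1/s - 1) + s * (1/ca - 1)"
      using s assms by (simp add: field_simps)
    thus ?thesis using a b by linarith
  qed
  have 3: "1/s - s \<le> ((1/cy - cy) + (1/cz - cz))/2"
  proof -
    have "((1/cy - cy) + (1/cz - cz))/2 = (1/cy + 1/cz)/2 - s" by (simp add: s_def field_simps)
    moreover have "1/s \<le> (1/cy + 1/cz)/2" using amhm by simp
    ultimately show ?thesis by linarith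
  qed
  show ?thesis using 1 2 3 by linarith
qed

lemma cos_dist_bounds:
  fixes v w :: "'a::metric_space"
  assumes k: "k > 0" and diam: "\<forall>v w::'a. dist v w < pi / (2 * sqrt k)"
  shows "0 < cos (sqrt k * dist v w)" "cos (sqrt k * dist v w) \<le> 1"
    "0 \<le> sqrt k * dist v w" "sqrt k * dist v w < pi/2"
proof -
  show "sqrt k * dist v w < pi/2" using diam[rule_format, of v w] k by (simp add: field_simps)
  moreover show "0 \<le> sqrt k * dist v w" using k by simp
  ultimately show "0 < cos (sqrt k * dist v w)" by (intro cos_gt_zero_pi) auto
qed simp

lemma psi_mid:
  fixes x y z :: "'a::metric_space"
  assumes k: "k > 0" and cat: "CAT k TYPE('a)"
    and diam: "\<forall>v w::'a. dist v w < pi / (2 * sqrt k)"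
    and g: "geodesic_in UNIV dist g y z"
  shows "Psi k x (g (dist y z / 2)) \<le> (Psi k x y + Psi k x z)/2 - (1 - cos (sqrt k * dist y z / 2)) / k"
proof -
  define m where "m = g (dist y z / 2)"
  define cy where "cy = cos (sqrt k * dist x y)"
  define cz where "cz = cos (sqrt k * dist x z)"
  define cm where "cm = cos (sqrt k * dist x m)"
  define ca where "ca = cos (sqrt k * dist y z / 2)"
  note cb = cos_dist_bounds[OF k diam]
  have ca: "0 < ca" "ca \<le> 1"
  proof -
    have "sqrt k * dist y z / 2 < pi/2" using cb(4)[of y z] pi_gt_zero by linarith
    moreover have "0 \<le> sqrt k * dist y z / 2" using k by simp
    ultimately show "0 < ca" unfolding ca_def by (intro cos_gt_zero_pi) auto
  qed (simp add: ca_def)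
  have "cy + cz \<le> 2 * ca * cm"
    using cat_mid[OF k cat diam g, of x] by (simp add: cy_def cz_def cm_def ca_def m_def)
  hence h: "1/cm - cm \<le> ((1/cy - cy) + (1/cz - cz))/2 - (1 - ca)"
    using hfun_ineq[of cy cz ca cm] cb ca by (simp add: cy_def cz_def cm_def)
  have ps: "Psi k x w = (1 / cos (sqrt k * dist x w) - cos (sqrt k * dist x w)) / k" for w
    by (simp add: Psi_def dist_commute diff_divide_distrib)
  have "Psi k x m = (1/cm - cm)/k" by (simp add: ps cm_def)
  also have "\<dots> \<le> (((1/cy - cy) + (1/cz - cz))/2 - (1 - ca))/k"
    using h k by (simp add: divide_right_mono)
  also have "\<dots> = (Psi k x y + Psi k x z)/2 - (1 - ca)/k"
    using k by (simp add: ps cy_def cz_def diff_divide_distrib add_divide_distrib)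
  finally show ?thesis by (simp add: m_def ca_def)
qed

lemma hfun_mono:
  fixes t1 t2 :: real
  assumes "0 \<le> t1" "t1 \<le> t2" "t2 < pi/2"
  shows "1/cos t1 - cos t1 \<le> 1/cos t2 - cos t2"
proof -
  have c2: "0 < cos t2" using assms by (intro cos_gt_zero_pi) auto
  have "cos t2 \<le> cos t1" using assms by (intro cos_monotone_0_pi_le) auto
  moreover hence "1/cos t1 \<le> 1/cos t2" using c2 by (simp add: frac_le)
  ultimately show ?thesis by linarith
qed

lemma hfun_strict:
  fixes t1 t2 :: real
  assumes "0 \<le> t1" "t1 < t2" "t2 < pi/2"
  shows "1/cos t1 - cos t1 < 1/cos t2 - cos t2"
proof -
  have c2: "0 < cos t2" using assms by (intro cos_gt_zero_pi) auto
  have "cos t2 < cos t1" using assms by (intro cos_monotone_0_pi) auto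
  moreover hence "1/cos t1 \<le> 1/cos t2" using c2 by (simp add: frac_le)
  ultimately show ?thesis by linarith
qed

lemma geo_exists:
  fixes x y :: "'a::metric_space"
  assumes k: "k > 0" and cat: "CAT k TYPE('a)"
    and diam: "\<forall>v w::'a. dist v w < pi / (2 * sqrt k)"
  shows "\<exists>g. geodesic_in UNIV dist g x y"
proof -
  have "pi / (2 * sqrt k) \<le> pi / sqrt k" using k by (simp add: frac_le)
  hence "dist x y < pi / sqrt k" using diam by (meson less_le_trans)
  thus ?thesis using cat unfolding CAT_def by blast
qed

lemma lsc_ev:
  fixes f :: "'a::metric_space \<Rightarrow> ereal"
  assumes "lsc f" "(y \<longlongrightarrow> z) F" "ereal r < f z"
  shows "eventually (\<lambda>n. ereal r < f (y n)) F"
proof -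
  have "f z \<le> Liminf (at z) f" using assms(1) by (simp add: lsc_def)
  hence "eventually (\<lambda>w. ereal r < f w) (at z)" using assms(3) le_Liminf_iff by blast
  then obtain d where d: "d > 0" "\<And>w. w \<noteq> z \<Longrightarrow> dist w z < d \<Longrightarrow> ereal r < f w"
    unfolding eventually_at by auto
  have "eventually (\<lambda>n. dist (y n) z < d) F" using assms(2) d(1) by (rule tendstoD)
  thus ?thesis
  proof (rule eventually_mono)
    fix n assume "dist (y n) z < d"
    thus "ereal r < f (y n)" using d(2)[of "y n"] assms(3) by (cases "y n = z") auto
  qed
qed

lemma psi_form:
  "Psi k x w = (1 / cos (sqrt k * dist x w) - cos (sqrt k * dist x w)) / k"
  by (simp add: Psi_def dist_commute diff_divide_distrib)

lemma psi_nonneg: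
  fixes x w :: "'a::metric_space"
  assumes k: "k > 0" and diam: "\<forall>v w::'a. dist v w < pi / (2 * sqrt k)"
  shows "0 \<le> Psi k x w"
proof -
  note cb = cos_dist_bounds[OF k diam, of x w]
  have "1 \<le> 1 / cos (sqrt k * dist x w)" using cb by (simp add: field_simps)
  hence "0 \<le> 1 / cos (sqrt k * dist x w) - cos (sqrt k * dist x w)" using cb by linarith
  thus ?thesis using k by (simp add: psi_form)
qed

lemma psi_tendsto:
  fixes x :: "'a::metric_space"
  assumes k: "k > 0" and diam: "\<forall>v w::'a. dist v w < pi / (2 * sqrt k)"
    and lim: "(y \<longlongrightarrow> z) F"
  shows "((\<lambda>n. Psi k x (y n)) \<longlongrightarrow> Psi k x z) F"
proof -
  have c: "cos (sqrt k * dist x z) \<noteq> 0" using cos_dist_bounds[OF k diam, of x z] by simp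
  have "((\<lambda>n. dist x (y n)) \<longlongrightarrow> dist x z) F" using lim by (intro tendsto_intros)
  hence hc: "((\<lambda>n. cos (sqrt k * dist x (y n))) \<longlongrightarrow> cos (sqrt k * dist x z)) F"
  proof -
    have "((\<lambda>n. sqrt k * dist x (y n)) \<longlongrightarrow> sqrt k * dist x z) F" using \<open>((\<lambda>n. dist x (y n)) \<longlongrightarrow> dist x z) F\<close> by (rule tendsto_mult_left)
    thus ?thesis by (rule isCont_tendsto_compose[OF isCont_cos])
  qed
  hence "((\<lambda>n. (1 / cos (sqrt k * dist x (y n)) - cos (sqrt k * dist x (y n))) / k) \<longlongrightarrow>
         (1 / cos (sqrt k * dist x z) - cos (sqrt k * dist x z)) / k) F"
    using c k by (intro tendsto_intros hc) auto
  thus ?thesis by (simp add: psi_form)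
qed

lemma mid_exists:
  fixes f :: "'a::metric_space \<Rightarrow> ereal"
  assumes k: "k > 0" and cat: "CAT k TYPE('a)"
    and diam: "\<forall>v w::'a. dist v w < pi / (2 * sqrt k)"
    and conv: "geod_convex f"
  shows "\<exists>m. f m \<le> ereal (1/2) * f y + ereal (1/2) * f z \<and>
     Psi k x m \<le> (Psi k x y + Psi k x z)/2 - (1 - cos (sqrt k * dist y z / 2)) / k"
proof -
  obtain g where g: "geodesic_in UNIV dist g y z" using geo_exists[OF k cat diam] by blast
  have "f (g ((1/2) * dist y z)) \<le> ereal (1 - 1/2) * f y + ereal (1/2) * f z"
  proof -
    have "(1/2::real) \<in> {0..1}" by simp
    thus ?thesis using conv g unfolding geod_convex_def by blast
  qed
  moreover have "(1::real) - 1/2 = 1/2" by simp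
  ultimately have "f (g (dist y z / 2)) \<le> ereal (1/2) * f y + ereal (1/2) * f z" by simp
  thus ?thesis using psi_mid[OF k cat diam g, of x] by blast
qed

lemma gap_small:
  fixes e :: real
  assumes k: "k > 0" and diam: "\<forall>v w::'a::metric_space. dist v w < pi / (2 * sqrt k)" and e: "e > 0"
  shows "\<exists>d>0. \<forall>y z::'a. 1 - cos (sqrt k * dist y z / 2) < d \<longrightarrow> dist y z < e"
proof -
  define D where "D = pi / (2 * sqrt k)"
  have D: "D > 0" using k by (simp add: D_def)
  define e' where "e' = min e D"
  have e': "0 < e'" "e' \<le> e" "e' \<le> D" using e D by (auto simp: e'_def)
  have sk: "sqrt k > 0" using k by simp
  have SeD: "sqrt k * e' / 2 \<le> pi / 4"
  proof -
    have "sqrt k * e' \<le> sqrt k * D" using e' sk by simp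
    also have "\<dots> = pi / 2" using sk by (simp add: D_def)
    finally have "sqrt k * e' \<le> pi / 2" .
    thus ?thesis by linarith
  qed
  have pos: "0 < sqrt k * e' / 2" using sk e' by simp
  have le_pi: "sqrt k * e' / 2 \<le> pi" using SeD pi_gt_zero by linarith
  have "cos (sqrt k * e' / 2) < cos 0"
    using pos le_pi by (intro cos_monotone_0_pi) auto
  hence d: "0 < 1 - cos (sqrt k * e' / 2)" by simp
  show ?thesis
  proof (intro exI[of _ "1 - cos (sqrt k * e' / 2)"] conjI allI impI d)
    fix y z :: 'a
    assume a: "1 - cos (sqrt k * dist y z / 2) < 1 - cos (sqrt k * e' / 2)"
    show "dist y z < e"
    proof (rule ccontr)
      assume "\<not> dist y z < e"
      hence ge: "e' \<le> dist y z" using e' by simp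
      have "sqrt k * dist y z < pi/2" using cos_dist_bounds(4)[OF k diam] by blast
      hence lp: "sqrt k * dist y z / 2 \<le> pi" using pi_gt_zero by linarith
      have "sqrt k * e' \<le> sqrt k * dist y z" using ge sk by (simp add: mult_left_mono)
      hence "cos (sqrt k * dist y z / 2) \<le> cos (sqrt k * e' / 2)"
        using lp pos by (intro cos_monotone_0_pi_le) auto
      thus False using a by linarith
    qed
  qed
qed

lemma f_lower_bound:
  fixes f :: "'a::metric_space \<Rightarrow> ereal"
  assumes k: "k > 0" and cat: "CAT k TYPE('a)"
    and diam: "\<forall>v w::'a. dist v w < pi / (2 * sqrt k)"
    and prp: "proper_fun f" and conv: "geod_convex f" and lsc: "lsc f"
  shows "\<exists>B::real. \<forall>y. ereal B \<le> f y"
proof (rule ccontr)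
  assume "\<not> ?thesis"
  hence nb: "\<forall>B::real. \<exists>y. f y < ereal B" by (auto simp: not_le)
  obtain z0 where "f z0 \<noteq> \<infinity>" using prp by (auto simp: proper_fun_def)
  moreover have "f z0 \<noteq> -\<infinity>" using prp by (auto simp: proper_fun_def)
  ultimately obtain a where a: "f z0 = ereal a" by (cases "f z0") auto
  have "\<forall>n::nat. \<exists>y. f y < ereal (0 - (real n + 1) * (real n + 1))" by (intro allI) (rule nb[rule_format])
  then obtain y where y0: "\<forall>n. f (y n) < ereal (0 - (real n + 1) * (real n + 1))"
    by (rule choice[THEN exE])
  note y = y0[rule_format]
  define D where "D = pi / (2 * sqrt k)"
  have D: "D > 0" using k by (simp add: D_def)
  have "\<forall>n. \<exists>g. geodesic_in UNIV dist g z0 (y n)" using geo_exists[OF k cat diam] by blast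
  then obtain G where G0: "\<forall>n. geodesic_in UNIV dist (G n) z0 (y n)" by (rule choice[THEN exE])
  note G = G0[rule_format]
  define t where "t n = 1 / (real n + 1)" for n
  have t: "0 < t n" "t n \<le> 1" for n by (auto simp: t_def)
  define w where "w n = G n (t n * dist z0 (y n))" for n
  have dw: "dist (w n) z0 = t n * dist z0 (y n)" for n
  proof -
    have "dist (G n 0) (G n (t n * dist z0 (y n))) = \<bar>0 - t n * dist z0 (y n)\<bar>"
      using geod_props(4)[OF G[of n], of 0 "t n * dist z0 (y n)"] t[of n]
      by (simp add: mult_left_le_one_le)
    thus ?thesis using geod_props(1)[OF G[of n]] t[of n] by (simp add: w_def dist_commute)
  qed
  have wlim: "w \<longlonglongrightarrow> z0"
  proof (rule metric_LIMSEQ_I)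
    fix r :: real assume r: "0 < r"
    obtain N :: nat where N: "D / r < real N" using reals_Archimedean2 by blast
    show "\<exists>no. \<forall>n\<ge>no. dist (w n) z0 < r"
    proof (intro exI allI impI)
      fix n assume "N \<le> n"
      hence "D / r < real n + 1" using N by linarith
      hence "D < r * (real n + 1)" using r by (simp add: field_simps)
      hence lt: "D / (real n + 1) < r" by (simp add: field_simps)
      have "dist z0 (y n) \<le> D" using diam by (simp add: D_def less_imp_le)
      hence "dist (w n) z0 \<le> t n * D"
        using dw t[of n] by (simp add: mult_left_mono)
      also have "\<dots> = D / (real n + 1)" by (simp add: t_def)
      finally show "dist (w n) z0 < r" using lt by linarith
    qed
  qed
  have ev: "eventually (\<lambda>n. ereal (a - 1) < f (w n)) sequentially"
    using lsc_ev[OF lsc wlim] a by simp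
  then obtain N where N: "\<And>n. n \<ge> N \<Longrightarrow> ereal (a - 1) < f (w n)"
    unfolding eventually_sequentially by blast
  define n where "n = max N (nat \<lceil>\<bar>a\<bar> - a\<rceil>)"
  have n1: "ereal (a - 1) < f (w n)" using N by (simp add: n_def)
  have nge: "\<bar>a\<bar> - a \<le> real n" unfolding n_def by linarith
  have fy: "f (y n) \<noteq> -\<infinity>" using prp by (simp add: proper_fun_def)
  then obtain b where b: "f (y n) = ereal b" "b < 0 - (real n + 1) * (real n + 1)"
    using y[of n] by (cases "f (y n)") auto
  have tin: "t n \<in> {0..1}" using t[of n] by simp
  have "f (w n) \<le> ereal (1 - t n) * f z0 + ereal (t n) * f (y n)"
    unfolding w_def by (rule conv[unfolded geod_convex_def, rule_format, OF conjI[OF G[of n] tin]])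
  also have "\<dots> = ereal ((1 - t n) * a + t n * b)" using a b by simp
  finally have fw: "f (w n) \<le> ereal ((1 - t n) * a + t n * b)" .
  have "t n * b < t n * (0 - (real n + 1) * (real n + 1))" using b(2) t[of n] by (intro mult_strict_left_mono) auto
  also have "\<dots> = - (real n + 1)" by (simp add: t_def power2_eq_square)
  finally have tb: "t n * b < - (real n + 1)" .
  have "(1 - t n) * a \<le> \<bar>a\<bar>"
  proof -
    have "(1 - t n) * a \<le> (1 - t n) * \<bar>a\<bar>" using t[of n] by (simp add: mult_left_mono)
    also have "\<dots> \<le> \<bar>a\<bar>" using t[of n] by (simp add: mult_left_le_one_le)
    finally show ?thesis .
  qed
  hence "(1 - t n) * a + t n * b < a - 1" using tb nge by linarith
  moreover have "ereal (a - 1) < ereal ((1 - t n) * a + t n * b)" using n1 fw by (rule less_le_trans)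
  ultimately show False by simp
qed

lemma mid_F:
  fixes f :: "'a::metric_space \<Rightarrow> ereal"
  assumes k: "k > 0" and cat: "CAT k TYPE('a)"
    and diam: "\<forall>v w::'a. dist v w < pi / (2 * sqrt k)"
    and conv: "geod_convex f" and l: "l > 0"
    and fa: "f a = ereal fa" and fb: "f b = ereal fb"
  shows "\<exists>mm. f mm + ereal (Psi k x mm / l) \<le>
     ereal ((fa + Psi k x a / l + (fb + Psi k x b / l))/2 - (1 - cos (sqrt k * dist a b / 2)) / (k * l))"
proof -
  obtain mm where m1: "f mm \<le> ereal (1/2) * f a + ereal (1/2) * f b"
    and m2: "Psi k x mm \<le> (Psi k x a + Psi k x b)/2 - (1 - cos (sqrt k * dist a b / 2)) / k"
    using mid_exists[OF k cat diam conv, of a b x] by blast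
  have "f mm \<le> ereal ((fa + fb)/2)" using m1 fa fb by (simp add: add_divide_distrib)
  moreover have "Psi k x mm / l \<le> ((Psi k x a + Psi k x b)/2 - (1 - cos (sqrt k * dist a b / 2)) / k) / l"
    using m2 l by (simp add: divide_right_mono)
  ultimately have "f mm + ereal (Psi k x mm / l) \<le>
     ereal ((fa + fb)/2) + ereal (((Psi k x a + Psi k x b)/2 - (1 - cos (sqrt k * dist a b / 2)) / k) / l)"
    by (intro add_mono) auto
  also have "\<dots> = ereal ((fa + Psi k x a / l + (fb + Psi k x b / l))/2 - (1 - cos (sqrt k * dist a b / 2)) / (k * l))"
    using k l by (simp add: field_simps)
  finally show ?thesis by blast
qed

lemma ereal_less_add_real:
  fixes A :: ereal
  assumes "ereal m < A + ereal c"
  shows "ereal (m - c) < A"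
  using assms by (cases A) auto

lemma gap_pos:
  fixes y z :: "'a::metric_space"
  assumes k: "k > 0" and diam: "\<forall>v w::'a. dist v w < pi / (2 * sqrt k)" and ne: "y \<noteq> z"
  shows "0 < 1 - cos (sqrt k * dist y z / 2)"
proof -
  have p: "0 < sqrt k * dist y z / 2" using k ne by simp
  have "sqrt k * dist y z < pi/2" using cos_dist_bounds(4)[OF k diam] by blast
  hence "sqrt k * dist y z / 2 \<le> pi" using pi_gt_zero by linarith
  hence "cos (sqrt k * dist y z / 2) < cos 0" using p by (intro cos_monotone_0_pi) auto
  thus ?thesis by simp
qed

lemma avg_bound:
  fixes Fi Fj m a b c :: real
  assumes "Fi < m + a" "Fj < m + b" "a \<le> c" "b \<le> c" shows "(Fi + Fj)/2 - m < c"
proof -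
  have "Fi + Fj < 2*m + 2*c" using assms by linarith
  thus ?thesis by (simp add: field_simps)
qed

lemma resolvent_prop:
  fixes f :: "'a::complete_space \<Rightarrow> ereal"
  assumes k: "k > 0" and cat: "CAT k TYPE('a)"
    and diam: "\<forall>v w::'a. dist v w < pi / (2 * sqrt k)"
    and prp: "proper_fun f" and conv: "geod_convex f" and lsc: "lsc f" and l: "l > 0"
  shows "\<forall>z. f (resolvent k f l x) + ereal (Psi k x (resolvent k f l x) / l) \<le> f z + ereal (Psi k x z / l)"
proof -
  define F where "F w = f w + ereal (Psi k x w / l)" for w
  obtain B where B: "\<And>y. ereal B \<le> f y" using f_lower_bound[OF k cat diam prp conv lsc] by blast
  have psl: "0 \<le> Psi k x w / l" for w using psi_nonneg[OF k diam] l by simp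
  have Flow: "ereal B \<le> F w" for w
    unfolding F_def using B[of w] psl[of w] by (intro add_increasing2) auto
  have ninf: "f w \<noteq> -\<infinity>" for w using prp by (simp add: proper_fun_def)
  obtain z0 where z0: "f z0 \<noteq> \<infinity>" using prp by (auto simp: proper_fun_def)
  have Fz0: "F z0 < \<infinity>" using z0 ninf[of z0] by (cases "f z0") (auto simp: F_def)
  define M where "M = (INF w. F w)"
  have "ereal B \<le> M" unfolding M_def by (rule INF_greatest) (rule Flow)
  moreover have "M \<le> F z0" unfolding M_def by (rule INF_lower) simp
  ultimately obtain m where m: "M = ereal m" using Fz0 by (cases M) auto
  have Mle: "ereal m \<le> F w" for w using m unfolding M_def by (metis INF_lower UNIV_I)
  have fin: "f w = ereal (real_of_ereal (f w))" if "F w < \<infinity>" for w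
    using that ninf[of w] by (cases "f w") (auto simp: F_def)
  have Freal: "F w = ereal (real_of_ereal (f w) + Psi k x w / l)" if "F w < \<infinity>" for w
    using fin[OF that] unfolding F_def by (metis plus_ereal.simps(1))
  have midr: "(1 - cos (sqrt k * dist a b / 2)) / (k * l) \<le>
      (real_of_ereal (F a) + real_of_ereal (F b))/2 - m" if fa: "F a < \<infinity>" and fb: "F b < \<infinity>" for a b
  proof -
    obtain mm where mm: "f mm + ereal (Psi k x mm / l) \<le>
     ereal ((real_of_ereal (f a) + Psi k x a / l + (real_of_ereal (f b) + Psi k x b / l))/2 - (1 - cos (sqrt k * dist a b / 2)) / (k * l))"
      using mid_F[OF k cat diam conv l fin[OF fa] fin[OF fb]] by blast
    have "ereal m \<le> F mm" by (rule Mle)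
    hence "ereal m \<le> ereal ((real_of_ereal (f a) + Psi k x a / l + (real_of_ereal (f b) + Psi k x b / l))/2 - (1 - cos (sqrt k * dist a b / 2)) / (k * l))"
      using mm unfolding F_def by (rule order_trans)
    hence "m \<le> (real_of_ereal (F a) + real_of_ereal (F b))/2 - (1 - cos (sqrt k * dist a b / 2)) / (k * l)"
      using Freal[OF fa] Freal[OF fb] by simp
    thus ?thesis by linarith
  qed
  have ex: "\<exists>y. \<forall>z. F y \<le> F z"
  proof -
    have "\<forall>n. \<exists>y. F y < ereal (m + inverse (real (Suc n)))"
    proof
      fix n
      have "M < ereal (m + inverse (real (Suc n)))" using m by simp
      thus "\<exists>y. F y < ereal (m + inverse (real (Suc n)))" unfolding M_def by (simp add: INF_less_iff)
    qed
    then obtain y where y0: "\<forall>n. F (y n) < ereal (m + inverse (real (Suc n)))" by (rule choice[THEN exE])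
    note y = y0[rule_format]
    have yinf: "F (y n) < \<infinity>" for n 
  proof -
    have "ereal (m + inverse (real (Suc n))) < \<infinity>" by simp
    thus ?thesis using y[of n] by (meson less_trans)
  qed
    define Fr where "Fr n = real_of_ereal (F (y n))" for n
    have Fr: "m \<le> Fr n" "Fr n < m + inverse (real (Suc n))" for n
      using Mle[of "y n"] y[of n] Freal[OF yinf[of n]] by (auto simp: Fr_def)
    have cauchy: "Cauchy y"
      unfolding Cauchy_def
    proof (intro allI impI)
      fix e :: real assume e: "0 < e"
      from gap_small[OF k diam e] obtain d where d: "d > 0"
          and d2: "\<forall>a b::'a. 1 - cos (sqrt k * dist a b / 2) < d \<longrightarrow> dist a b < e"
        by (elim exE conjE)
      have "0 < d / (k * l)" using d k l by simp
      from reals_Archimedean[OF this] obtain N where N: "inverse (real (Suc N)) < d / (k * l)" by (elim exE)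
      show "\<exists>M. \<forall>i\<ge>M. \<forall>j\<ge>M. dist (y i) (y j) < e"
      proof (intro exI allI impI)
        fix i j assume ij: "N \<le> i" "N \<le> j"
        have ii: "inverse (real (Suc i)) \<le> inverse (real (Suc N))" using ij by (simp add: le_imp_inverse_le)
        have jj: "inverse (real (Suc j)) \<le> inverse (real (Suc N))" using ij by (simp add: le_imp_inverse_le)
        have g: "(1 - cos (sqrt k * dist (y i) (y j) / 2)) / (k * l) \<le> (Fr i + Fr j)/2 - m"
          using midr[OF yinf[of i] yinf[of j]] by (simp add: Fr_def)
        have "(Fr i + Fr j)/2 - m < inverse (real (Suc N))"
          using avg_bound[OF Fr(2)[of i] Fr(2)[of j] ii jj] .
        hence "(1 - cos (sqrt k * dist (y i) (y j) / 2)) / (k * l) < d / (k * l)" using g N by linarith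
        hence "1 - cos (sqrt k * dist (y i) (y j) / 2) < d" using k l by (simp add: divide_strict_right_mono_neg divide_less_cancel)
        thus "dist (y i) (y j) < e" using d2 by blast
      qed
    qed
    then obtain ys where ys: "y \<longlonglongrightarrow> ys" using Cauchy_convergent convergent_def by blast
    have Frlim: "Fr \<longlonglongrightarrow> m"
    proof (rule tendsto_sandwich)
      show "eventually (\<lambda>n. m \<le> Fr n) sequentially" using Fr by simp
      show "eventually (\<lambda>n. Fr n \<le> m + inverse (real (Suc n))) sequentially"
        by (rule always_eventually) (use Fr(2) less_imp_le in blast)
      show "(\<lambda>n. m) \<longlonglongrightarrow> m" by simp
      show "(\<lambda>n. m + inverse (real (Suc n))) \<longlonglongrightarrow> m"
        using tendsto_add[OF tendsto_const LIMSEQ_inverse_real_of_nat, of m] by simp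
    qed
    have Plim: "(\<lambda>n. Psi k x (y n) / l) \<longlonglongrightarrow> Psi k x ys / l"
      using psi_tendsto[OF k diam ys] by (intro tendsto_divide tendsto_const) (use l in auto)
    have frlim: "(\<lambda>n. Fr n - Psi k x (y n) / l) \<longlonglongrightarrow> m - Psi k x ys / l"
      using Frlim Plim by (intro tendsto_diff)
    have frn: "Fr n - Psi k x (y n) / l = real_of_ereal (f (y n))" for n
      using Freal[OF yinf[of n]] by (simp add: Fr_def)
    have "F ys \<le> ereal m"
    proof (rule ccontr)
      assume "\<not> F ys \<le> ereal m"
      hence "ereal m < f ys + ereal (Psi k x ys / l)" by (simp add: F_def)
      hence "ereal (m - Psi k x ys / l) < f ys" by (rule ereal_less_add_real)
      then obtain r where r: "ereal (m - Psi k x ys / l) < ereal r" "ereal r < f ys"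
        using ereal_dense2 by blast
      have "eventually (\<lambda>n. ereal r < f (y n)) sequentially" using lsc_ev[OF lsc ys r(2)] .
      hence "eventually (\<lambda>n. r \<le> Fr n - Psi k x (y n) / l) sequentially"
      proof (rule eventually_mono)
        fix n assume "ereal r < f (y n)"
        hence "r < real_of_ereal (f (y n))" using fin[OF yinf[of n]] by (metis ereal_less_eq(3) not_le)
        thus "r \<le> Fr n - Psi k x (y n) / l" using frn[of n] by simp
      qed
      hence "r \<le> m - Psi k x ys / l" using frlim by (intro tendsto_lowerbound) auto
      thus False using r(1) by simp
    qed
    thus ?thesis using Mle by (meson order_trans)
  qed
  have uq: "y1 = y2" if "\<forall>z. F y1 \<le> F z" "\<forall>z. F y2 \<le> F z" for y1 y2
  proof (rule ccontr)
    assume ne: "y1 \<noteq> y2"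
    have f1: "F y1 < \<infinity>" using that(1) Fz0 by (meson le_less_trans)
    have f2: "F y2 < \<infinity>" using that(2) Fz0 by (meson le_less_trans)
    have eq: "F y1 = F y2" using that by (meson antisym)
    have Mm: "ereal m = F y1"
    proof -
      have "F y1 \<le> M" unfolding M_def using that(1) by (simp add: le_INF_iff)
      thus ?thesis using Mle[of y1] m by simp
    qed
    have "0 < (1 - cos (sqrt k * dist y1 y2 / 2)) / (k * l)"
      using gap_pos[OF k diam ne] k l by simp
    moreover have "(1 - cos (sqrt k * dist y1 y2 / 2)) / (k * l) \<le>
      (real_of_ereal (F y1) + real_of_ereal (F y2))/2 - m" by (rule midr[OF f1 f2])
    moreover have "real_of_ereal (F y1) = m" "real_of_ereal (F y2) = m" using Mm eq by (metis real_of_ereal.simps(1))+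
    ultimately show False by simp
  qed
  have "\<exists>!y. \<forall>z. F y \<le> F z" using ex uq by blast
  hence "\<forall>z. F (THE y. \<forall>z. F y \<le> F z) \<le> F z" by (rule theI')
  thus ?thesis by (simp add: F_def resolvent_def)
qed

lemma lin_helper: fixes a b c g :: real
  assumes "a \<le> c" "c \<le> (a + b)/2 - g" shows "g \<le> (b - a)/2"
proof -
  have "a \<le> (a + b)/2 - g" using assms by (rule order_trans)
  hence "2 * a \<le> a + b - 2 * g" by (simp add: field_simps)
  hence "2 * g \<le> b - a" by simp
  thus ?thesis by simp
qed

theorem mainTheorem4:
  fixes \<kappa> :: real and f :: "'a::complete_space \<Rightarrow> ereal" and x :: 'a
    and lam :: "nat \<Rightarrow> real"
  assumes "\<kappa> > 0"
    and "CAT \<kappa> TYPE('a)"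
    and "\<forall>v w::'a. dist v w < pi / (2 * sqrt \<kappa>)"
    and "proper_fun f" and "geod_convex f" and "lsc f"
    and "\<forall>n. lam n > 0"
    and "filterlim lam at_top sequentially"
    and "limsup (\<lambda>n. ereal (dist x (resolvent \<kappa> f (lam n) x))) < ereal (pi / (2 * sqrt \<kappa>))"
  shows "\<exists>z. (\<forall>w. f z \<le> f w) \<and> ((\<lambda>l. resolvent \<kappa> f l x) \<longlongrightarrow> z) at_top"
proof -
  note k = assms(1) and cat = assms(2) and diam = assms(3) and prp = assms(4)
    and conv = assms(5) and lsc = assms(6) and lpos = assms(7) and llim = assms(8) and ls = assms(9)
  define J where "J l = resolvent \<kappa> f l x" for l
  define P where "P l = Psi \<kappa> x (J l)" for l
  define S where "S = sqrt \<kappa>"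
  have S: "S > 0" using k by (simp add: S_def)
  have RP: "f (J l) + ereal (P l / l) \<le> f z + ereal (Psi \<kappa> x z / l)" if "l > 0" for l z
    using resolvent_prop[OF k cat diam prp conv lsc that, of x] by (simp add: J_def P_def)
  have ninf: "f w \<noteq> -\<infinity>" for w using prp by (simp add: proper_fun_def)
  obtain z0 where z0: "f z0 \<noteq> \<infinity>" using prp by (auto simp: proper_fun_def)
  define fj where "fj l = real_of_ereal (f (J l))" for l
  have fin: "f (J l) = ereal (fj l)" if "l > 0" for l
  proof -
    have "f (J l) + ereal (P l / l) \<le> f z0 + ereal (Psi \<kappa> x z0 / l)" by (rule RP[OF that])
    moreover have "f z0 + ereal (Psi \<kappa> x z0 / l) < \<infinity>" using z0 ninf[of z0] by (cases "f z0") auto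
    ultimately have "f (J l) \<noteq> \<infinity>" by auto
    thus ?thesis using ninf[of "J l"] by (cases "f (J l)") (auto simp: fj_def)
  qed
  have rRP: "fj l + P l / l \<le> fw + Psi \<kappa> x w / l" if "l > 0" "f w = ereal fw" for l w fw
    using RP[OF that(1), of w] fin[OF that(1)] that(2) by simp
  have Pnn: "0 \<le> P l" for l using psi_nonneg[OF k diam] by (simp add: P_def)
  have mono: "P l \<le> P m \<and> fj m \<le> fj l" if lm: "0 < l" "l \<le> m" for l m
  proof -
    have m0: "0 < m" using lm by simp
    have 1: "fj l + P l / l \<le> fj m + P m / l" using rRP[OF lm(1) fin[OF m0]] by (simp add: P_def)
    have 2: "fj m + P m / m \<le> fj l + P l / m" using rRP[OF m0 fin[OF lm(1)]] by (simp add: P_def)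
    have "P l / l + P m / m \<le> P m / l + P l / m" using 1 2 by linarith
    hence "P l * (1/l - 1/m) \<le> P m * (1/l - 1/m)" by (simp add: algebra_simps)
    moreover have "0 \<le> 1/l - 1/m" using lm by (simp add: frac_le)
    ultimately have Pl: "P l \<le> P m"
    proof (cases "l = m")
      case False
      hence "0 < 1/l - 1/m" using lm by (simp add: frac_less2)
      thus ?thesis using \<open>P l * (1/l - 1/m) \<le> P m * (1/l - 1/m)\<close> by simp
    qed simp
    have "P l / m \<le> P m / m" using Pl m0 by (simp add: divide_right_mono)
    hence "fj m \<le> fj l" using 2 by linarith
    thus ?thesis using Pl by simp
  qed
  have psiform: "Psi \<kappa> x w = (1 / cos (S * dist x w) - cos (S * dist x w)) / \<kappa>" for w
    by (simp add: psi_form S_def)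
  note cb = cos_dist_bounds[OF k diam, folded S_def]
  have Pstrict: "Psi \<kappa> x a < Psi \<kappa> x b" if "dist x a < dist x b" for a b
  proof -
    have "1 / cos (S * dist x a) - cos (S * dist x a) < 1 / cos (S * dist x b) - cos (S * dist x b)"
      using that S cb(3)[of x a] cb(4)[of x b] by (intro hfun_strict) auto
    thus ?thesis using k by (simp add: psiform divide_strict_right_mono)
  qed
  obtain r where r1: "limsup (\<lambda>n. ereal (dist x (J (lam n)))) < ereal r" and r2: "ereal r < ereal (pi / (2 * sqrt \<kappa>))"
    using ereal_dense2[OF ls] by (auto simp: J_def)
  have evr: "eventually (\<lambda>n. ereal (dist x (J (lam n))) < ereal r) sequentially"
    using Limsup_lessD[OF r1] .
  have dr: "dist x (J l) < r" if l0: "0 < l" for l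
  proof -
    have "eventually (\<lambda>n. l \<le> lam n) sequentially" using llim by (simp add: filterlim_at_top)
    hence "eventually (\<lambda>n. l \<le> lam n \<and> ereal (dist x (J (lam n))) < ereal r) sequentially"
      using evr by (rule eventually_conj)
    then obtain n where n: "l \<le> lam n" "dist x (J (lam n)) < r"
      unfolding eventually_sequentially by auto
    have "P l \<le> P (lam n)" using mono[OF l0 n(1)] by simp
    hence "\<not> dist x (J (lam n)) < dist x (J l)" using Pstrict[of "J (lam n)" "J l"] by (auto simp: P_def)
    thus ?thesis using n(2) by simp
  qed
  have rS: "S * r < pi/2" using r2 S by (simp add: S_def field_simps)
  define Pr where "Pr = (1 / cos (S * r) - cos (S * r)) / \<kappa>"
  have Pbound: "P l \<le> Pr" if "0 < l" for l
  proof -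
    have "S * dist x (J l) \<le> S * r" using dr[OF that] S by simp
    hence "1 / cos (S * dist x (J l)) - cos (S * dist x (J l)) \<le> 1 / cos (S * r) - cos (S * r)"
      using cb(3)[of x "J l"] rS by (intro hfun_mono) auto
    thus ?thesis using k by (simp add: P_def psiform Pr_def divide_right_mono)
  qed
  have midest: "(1 - cos (S * dist (J l) (J m) / 2)) / \<kappa> \<le> (P m - P l)/2" if lm: "0 < l" "l \<le> m" for l m
  proof -
    have m0: "0 < m" using lm by simp
    obtain mm where m1: "f mm \<le> ereal (1/2) * f (J l) + ereal (1/2) * f (J m)"
      and m2: "Psi \<kappa> x mm \<le> (P l + P m)/2 - (1 - cos (S * dist (J l) (J m) / 2)) / \<kappa>"
      using mid_exists[OF k cat diam conv, of "J l" "J m" x] by (auto simp: P_def S_def)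
    have "f mm \<le> ereal ((fj l + fj m)/2)" using m1 fin[OF lm(1)] fin[OF m0] by (simp add: add_divide_distrib)
    moreover have "(fj l + fj m)/2 \<le> fj l" using mono[OF lm] by simp
    ultimately have fmm: "f mm \<le> ereal (fj l)" by (meson ereal_less_eq(3) order_trans)
    then obtain fm where fm: "f mm = ereal fm" "fm \<le> fj l" using ninf[of mm] by (cases "f mm") auto
    have "fj l + P l / l \<le> fm + Psi \<kappa> x mm / l" by (rule rRP[OF lm(1) fm(1)])
    hence "P l / l \<le> Psi \<kappa> x mm / l" using fm(2) by linarith
    hence "P l \<le> Psi \<kappa> x mm" using lm(1) by (simp add: divide_le_cancel)
    thus ?thesis using m2 by (rule lin_helper)
  qed
  define L where "L = (SUP l\<in>{0<..}. P l)"
  have bdd: "bdd_above (P ` {0<..})" using Pbound by (auto intro!: bdd_aboveI)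
  have PL: "P l \<le> L" if "0 < l" for l unfolding L_def using that bdd by (intro cSUP_upper) auto
  have cauchy_top: "\<exists>l0>0. \<forall>l m. l0 \<le> l \<longrightarrow> l \<le> m \<longrightarrow> dist (J l) (J m) < e" if e: "e > 0" for e
  proof -
    from gap_small[OF k diam e] obtain d where d: "d > 0"
        and d2: "\<forall>a b::'a. 1 - cos (sqrt \<kappa> * dist a b / 2) < d \<longrightarrow> dist a b < e"
      by (elim exE conjE)
    have "L - d / \<kappa> < L" using k d by simp
    hence "\<exists>l\<in>{0<..}. L - d / \<kappa> < P l" unfolding L_def using bdd by (subst (asm) less_cSUP_iff) auto
    then obtain l0 where l0: "0 < l0" "L - d / \<kappa> < P l0" by auto
    show ?thesis
    proof (intro exI[of _ l0] conjI allI impI l0(1))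
      fix l m assume a: "l0 \<le> l" "l \<le> m"
      have lp: "0 < l" using a l0 by simp
      have "(1 - cos (S * dist (J l) (J m) / 2)) / \<kappa> \<le> (P m - P l)/2" by (rule midest[OF lp a(2)])
      also have "\<dots> \<le> (L - P l0)/2" using PL[of m] mono[OF l0(1) a(1)] lp a by simp
      also have "\<dots> < d / \<kappa>"
      proof -
        have "0 < d / \<kappa>" using k d by simp
        hence "L - P l0 < 2 * (d / \<kappa>)" using l0(2) by linarith
        thus ?thesis by (simp add: mult.commute)
      qed
      finally have "1 - cos (S * dist (J l) (J m) / 2) < d" using k by (simp add: divide_strict_right_mono_neg divide_less_cancel)
      thus "dist (J l) (J m) < e" using d2 by (simp add: S_def)
    qed
  qed
  define s where "s n = J (real (Suc n))" for n
  have "Cauchy s"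
    unfolding Cauchy_def
  proof (intro allI impI)
    fix e :: real assume e: "0 < e"
    obtain l0 where l0: "l0 > 0" "\<forall>l m. l0 \<le> l \<longrightarrow> l \<le> m \<longrightarrow> dist (J l) (J m) < e"
      using cauchy_top[OF e] by blast
    obtain N :: nat where N: "l0 \<le> real N" using real_arch_simple by blast
    show "\<exists>M. \<forall>i\<ge>M. \<forall>j\<ge>M. dist (s i) (s j) < e"
    proof (intro exI allI impI)
      fix i j assume ij: "N \<le> i" "N \<le> j"
      show "dist (s i) (s j) < e"
      proof (cases "i \<le> j")
        case True
        thus ?thesis using l0(2) N ij by (simp add: s_def)
      next
        case False
        hence "dist (s j) (s i) < e" using l0(2) N ij by (simp add: s_def)
        thus ?thesis by (simp add: dist_commute)
      qed
    qed
  qed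
  then obtain z where sz: "s \<longlonglongrightarrow> z" using Cauchy_convergent convergent_def by blast
  have Jz: "(J \<longlongrightarrow> z) at_top"
    unfolding tendsto_iff
  proof (intro allI impI)
    fix e :: real assume e: "0 < e"
    obtain l0 where l0: "l0 > 0" "\<forall>l m. l0 \<le> l \<longrightarrow> l \<le> m \<longrightarrow> dist (J l) (J m) < e/2"
      using cauchy_top[of "e/2"] e by auto
    show "eventually (\<lambda>l. dist (J l) z < e) at_top"
      unfolding eventually_at_top_linorder
    proof (intro exI[of _ l0] allI impI)
      fix l assume l: "l0 \<le> l"
      have "eventually (\<lambda>n. dist (s n) z < e/2) sequentially" using sz e by (intro tendstoD) auto
      then obtain N1 where N1: "\<And>n. n \<ge> N1 \<Longrightarrow> dist (s n) z < e/2"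
        unfolding eventually_sequentially by blast
      obtain N2 :: nat where N2: "l \<le> real N2" using real_arch_simple by blast
      define n where "n = max N1 N2"
      have n1: "dist (s n) z < e/2" using N1 by (simp add: n_def)
      have n2: "l \<le> real (Suc n)" using N2 by (simp add: n_def)
      have "dist (J l) (s n) < e/2" using l0(2) l n2 by (simp add: s_def)
      moreover have "dist (J l) z \<le> dist (J l) (s n) + dist (s n) z" by (rule dist_triangle)
      ultimately show "dist (J l) z < e" using n1 by linarith
    qed
  qed
  have minz: "f z \<le> f w" for w
  proof (rule ccontr)
    assume "\<not> f z \<le> f w"
    hence lt: "f w < f z" by simp
    hence "f w \<noteq> \<infinity>" by auto
    then obtain fw where fw: "f w = ereal fw" using ninf[of w] by (cases "f w") auto
    obtain q where q: "ereal fw < ereal q" "ereal q < f z" using ereal_dense2 lt fw by metis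
    have ev: "eventually (\<lambda>n. ereal q < f (s n)) sequentially" by (rule lsc_ev[OF lsc sz q(2)])
    have "eventually (\<lambda>n. q \<le> fw + Psi \<kappa> x w / real (Suc n)) sequentially"
    proof (rule eventually_mono[OF ev])
      fix n assume a: "ereal q < f (s n)"
      have sp: "(0::real) < real (Suc n)" by simp
      have "q < fj (real (Suc n))" using a fin[OF sp] by (simp add: s_def)
      moreover have "fj (real (Suc n)) \<le> fw + Psi \<kappa> x w / real (Suc n)"
        using rRP[OF sp fw] Pnn[of "real (Suc n)"] by (smt (verit) divide_nonneg_pos sp)
      ultimately show "q \<le> fw + Psi \<kappa> x w / real (Suc n)" by simp
    qed
    moreover have "(\<lambda>n. fw + Psi \<kappa> x w * inverse (real (Suc n))) \<longlonglongrightarrow> fw + Psi \<kappa> x w * 0"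
      by (intro tendsto_add tendsto_const tendsto_mult_left LIMSEQ_inverse_real_of_nat)
    ultimately have "q \<le> fw" using tendsto_lowerbound[of "\<lambda>n. fw + Psi \<kappa> x w * inverse (real (Suc n))" "fw" sequentially q]
      by (simp add: divide_inverse)
    thus False using q(1) by simp
  qed
  have Jeq: "(\<lambda>l. resolvent \<kappa> f l x) = J" by (simp add: J_def fun_eq_iff)
  show ?thesis using minz Jz unfolding Jeq by blast
qed

end
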